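(* Let $I$ be a nearly complete intersection in $R=k[x_1,\dots,x_n]$, let $h$ be a minimal monomial generator of $I$ of degree at least $3$, and let $K$ be the ideal generated by the remaining minimal monomial generators of $I$, so $I=(h)+K$. Then $(h)\cap K=hJ$ for some ideal $J$ that is a complete intersection.
   Context: $k$ is a field. A nearly complete intersection is a squarefree monomial ideal $I$ that is not a complete intersection such that for every variable $x$ dividing some generator of $I$, the ideal $I(x=1)$ obtained by substituting $x=1$ in the generators is a complete intersection. *)

theory Defs
  imports "HOL-Library.Poly_Mapping"
begin

text \<open>The polynomial ring k[x_v : v in 'v] over a field k, with 'v a finite type of
  variables (so n = CARD('v)).\<close>

type_synonym ('v, 'k) mpoly = "('v \<Rightarrow>\<^sub>0 nat) \<Rightarrow>\<^sub>0 'k"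

definition monom :: "('v \<Rightarrow>\<^sub>0 nat) \<Rightarrow> ('v, 'k::field) mpoly" where
  "monom m = Poly_Mapping.single m 1"

definition mdeg :: "('v \<Rightarrow>\<^sub>0 nat) \<Rightarrow> nat" where
  "mdeg m = (\<Sum>v\<in>Poly_Mapping.keys m. Poly_Mapping.lookup m v)"

definition mdvd :: "('v \<Rightarrow>\<^sub>0 nat) \<Rightarrow> ('v \<Rightarrow>\<^sub>0 nat) \<Rightarrow> bool" where
  "mdvd a b = (\<forall>v. Poly_Mapping.lookup a v \<le> Poly_Mapping.lookup b v)"

definition gen_ideal :: "'a::comm_ring_1 set \<Rightarrow> 'a set" where
  "gen_ideal S = {f. \<exists>F r. finite F \<and> F \<subseteq> S \<and> f = (\<Sum>g\<in>F. r g * g)}"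

definition sqfree_monomial_ideal :: "('v, 'k::field) mpoly set \<Rightarrow> bool" where
  "sqfree_monomial_ideal I =
     (\<exists>G. (\<forall>m\<in>G. \<forall>v. Poly_Mapping.lookup m v \<le> 1) \<and> I = gen_ideal (monom ` G))"

definition mingens :: "('v, 'k::field) mpoly set \<Rightarrow> ('v \<Rightarrow>\<^sub>0 nat) set" where
  "mingens I = {m. monom m \<in> I \<and> (\<forall>m'. monom m' \<in> I \<and> mdvd m' m \<longrightarrow> m' = m)}"

definition regular_seq :: "'a::comm_ring_1 list \<Rightarrow> bool" where
  "regular_seq fs =
     ((\<forall>i<length fs. \<forall>g. fs ! i * g \<in> gen_ideal (set (take i fs))
                          \<longrightarrow> g \<in> gen_ideal (set (take i fs)))
      \<and> gen_ideal (set fs) \<noteq> UNIV)"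

definition complete_intersection :: "'a::comm_ring_1 set \<Rightarrow> bool" where
  "complete_intersection J = (\<exists>fs. regular_seq fs \<and> J = gen_ideal (set fs))"

text \<open>I(x=1): substitute x = 1 in the (minimal monomial) generators of I.\<close>
definition subst_one :: "'v \<Rightarrow> ('v, 'k::field) mpoly set \<Rightarrow> ('v, 'k) mpoly set" where
  "subst_one x I = gen_ideal ((\<lambda>m. monom (Poly_Mapping.update x 0 m)) ` mingens I)"

definition nearly_complete_intersection :: "('v, 'k::field) mpoly set \<Rightarrow> bool" where
  "nearly_complete_intersection I =
     (sqfree_monomial_ideal I \<and> \<not> complete_intersection I \<and>
      (\<forall>x. (\<exists>m\<in>mingens I. x \<in> Poly_Mapping.keys m) \<longrightarrow> complete_intersection (subst_one x I)))"

end

theory Submission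
  imports Defs "HOL.Modules"
begin

interpretation rmod: module "times :: 'a::comm_ring_1 \<Rightarrow> 'a \<Rightarrow> 'a"
  by standard (auto simp: algebra_simps)

lemma gen_ideal_span: "gen_ideal S = rmod.span S"
  unfolding gen_ideal_def rmod.span_explicit by auto

lemma lookup_Abs_fin [simp]:
  "Poly_Mapping.lookup (Abs_poly_mapping (f :: 'v::finite \<Rightarrow> 'b::zero)) = f"
  by (rule lookup_Abs_poly_mapping) simp

lemma monom_mult: "monom a * monom b = (monom (a + b) :: ('v,'k::field) mpoly)"
  unfolding monom_def by (simp add: mult_single)

lemma keys_monom [simp]: "Poly_Mapping.keys (monom a :: ('v,'k::field) mpoly) = {a}"
  unfolding monom_def by simp

lemma lookup_monom_mult:
  "Poly_Mapping.lookup (monom a * g :: ('v,'k::field) mpoly) (a + t) = Poly_Mapping.lookup g t"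
  unfolding monom_def lookup_mult lookup_single
  by (simp add: when_mult)

lemma poly_expand:
  "(f :: ('v,'k::field) mpoly) = (\<Sum>t\<in>Poly_Mapping.keys f. Poly_Mapping.single 0 (Poly_Mapping.lookup f t) * monom t)"
proof (rule poly_mapping_eqI)
  fix k
  have sm: "Poly_Mapping.single 0 c * monom t = Poly_Mapping.single t c" for c and t :: "'v \<Rightarrow>\<^sub>0 nat"
    unfolding monom_def by (simp add: mult_single)
  have "(\<Sum>t\<in>Poly_Mapping.keys f. Poly_Mapping.single 0 (Poly_Mapping.lookup f t) * monom t)
     = (\<Sum>t\<in>Poly_Mapping.keys f. Poly_Mapping.single t (Poly_Mapping.lookup f t))"
    by (simp only: sm)
  moreover have "Poly_Mapping.lookup (\<Sum>t\<in>Poly_Mapping.keys f. Poly_Mapping.single t (Poly_Mapping.lookup f t)) k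
     = Poly_Mapping.lookup f k"
    unfolding lookup_sum lookup_single
    by (cases "k \<in> Poly_Mapping.keys f") (simp_all add: when_def in_keys_iff)
  ultimately show "Poly_Mapping.lookup f k = Poly_Mapping.lookup (\<Sum>t\<in>Poly_Mapping.keys f. Poly_Mapping.single 0 (Poly_Mapping.lookup f t) * monom t) k"
    by simp
qed

lemma mdvd_refl [simp]: "mdvd a a" unfolding mdvd_def by simp
lemma mdvd_trans: "mdvd a b \<Longrightarrow> mdvd b c \<Longrightarrow> mdvd a c" unfolding mdvd_def using le_trans by blast
lemma mdvd_antisym: "mdvd a b \<Longrightarrow> mdvd b a \<Longrightarrow> a = b"
  unfolding mdvd_def by (rule poly_mapping_eqI) (meson antisym)
lemma mdvd_add: "mdvd a (a + b)" unfolding mdvd_def by (simp add: lookup_add)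

lemma monideal_keys:
  assumes "f \<in> gen_ideal (monom ` S :: ('v,'k::field) mpoly set)" "t \<in> Poly_Mapping.keys f"
  shows "\<exists>s\<in>S. mdvd s t"
proof -
  have "f \<in> rmod.span (monom ` S)" using assms(1) by (simp add: gen_ideal_span)
  then have "\<forall>t\<in>Poly_Mapping.keys f. \<exists>s\<in>S. mdvd s t"
  proof (induction rule: rmod.span_induct_alt)
    case base then show ?case by simp
  next
    case (step c x y)
    then obtain s where s: "s \<in> S" "x = monom s" by blast
    have k1: "Poly_Mapping.keys (c * x + y) \<subseteq> Poly_Mapping.keys (c * x) \<union> Poly_Mapping.keys y"
      by (rule keys_add)
    have k2: "Poly_Mapping.keys (c * x) \<subseteq> {a + s | a. True}"
      using keys_mult[of c x] s(2) by auto
    have "mdvd s (a + s)" for a using mdvd_add[of s a] by (simp add: add.commute)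
    then have "\<forall>t\<in>Poly_Mapping.keys (c * x). \<exists>s\<in>S. mdvd s t" using k2 s(1) by blast
    then show ?case using k1 step(2) by blast
  qed
  then show ?thesis using assms(2) by blast
qed

lemma monideal_memI:
  assumes "\<forall>t\<in>Poly_Mapping.keys f. \<exists>s\<in>S. mdvd s t"
  shows "(f :: ('v,'k::field) mpoly) \<in> gen_ideal (monom ` S)"
proof -
  have "Poly_Mapping.single 0 (Poly_Mapping.lookup f t) * monom t \<in> rmod.span (monom ` S)"
    if tk: "t \<in> Poly_Mapping.keys f" for t
  proof -
    obtain s where s: "s \<in> S" "mdvd s t" using assms tk by blast
    have "t = (t - s) + s"
    proof (rule poly_mapping_eqI)
      fix v
      have "Poly_Mapping.lookup s v \<le> Poly_Mapping.lookup t v" using s(2) unfolding mdvd_def by blast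
      then show "Poly_Mapping.lookup t v = Poly_Mapping.lookup (t - s + s) v"
        by (simp add: lookup_add lookup_minus)
    qed
    then have mt: "monom t = monom (t - s) * (monom s :: ('v,'k) mpoly)" by (simp add: monom_mult)
    have eq: "Poly_Mapping.single 0 (Poly_Mapping.lookup f t) * monom t
       = (Poly_Mapping.single 0 (Poly_Mapping.lookup f t) * monom (t - s)) * (monom s :: ('v,'k) mpoly)"
      unfolding mt by (simp only: mult.assoc)
    have "monom s \<in> rmod.span (monom ` S :: ('v,'k) mpoly set)"
      using s(1) by (intro rmod.span_base imageI)
    then show ?thesis unfolding eq by (rule rmod.span_scale)
  qed
  then   have "(\<Sum>t\<in>Poly_Mapping.keys f. Poly_Mapping.single 0 (Poly_Mapping.lookup f t) * monom t) \<in> rmod.span (monom ` S)"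
    by (intro rmod.span_sum) auto
  then have "f \<in> rmod.span (monom ` S)" by (simp only: poly_expand[of f, symmetric])
  then show ?thesis by (simp add: gen_ideal_span)
qed

lemma monom_in_monideal:
  "(monom t :: ('v,'k::field) mpoly) \<in> gen_ideal (monom ` S) \<longleftrightarrow> (\<exists>s\<in>S. mdvd s t)"
  using monideal_keys[of "monom t" S t] monideal_memI[of "monom t" S] by auto

lemma mingens_monideal:
  "m \<in> mingens (gen_ideal (monom ` S) :: ('v,'k::field) mpoly set) \<longleftrightarrow>
    m \<in> S \<and> (\<forall>s\<in>S. mdvd s m \<longrightarrow> s = m)"
proof
  assume "m \<in> mingens (gen_ideal (monom ` S) :: ('v,'k::field) mpoly set)"
  then have A: "\<exists>s\<in>S. mdvd s m" and B: "\<And>m'. (\<exists>s\<in>S. mdvd s m') \<Longrightarrow> mdvd m' m \<Longrightarrow> m' = m"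
    unfolding mingens_def monom_in_monideal by blast+
  from A obtain s where "s \<in> S" "mdvd s m" by blast
  then have "s = m" using B[of s] mdvd_refl by blast
  then show "m \<in> S \<and> (\<forall>s\<in>S. mdvd s m \<longrightarrow> s = m)" using \<open>s \<in> S\<close> B mdvd_refl by (metis)
next
  assume a: "m \<in> S \<and> (\<forall>s\<in>S. mdvd s m \<longrightarrow> s = m)"
  have "m' = m" if h1: "\<exists>s\<in>S. mdvd s m'" and h2: "mdvd m' m" for m'
  proof -
    obtain s where "s \<in> S" "mdvd s m'" using h1 by blast
    then have "s = m" using a h2 mdvd_trans by blast
    then show ?thesis using \<open>mdvd s m'\<close> h2 mdvd_antisym by blast
  qed
  then show "m \<in> mingens (gen_ideal (monom ` S) :: ('v,'k::field) mpoly set)"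
    unfolding mingens_def monom_in_monideal using a mdvd_refl by blast
qed


lemma nth_in_take: "i < n \<Longrightarrow> n \<le> length fs \<Longrightarrow> fs ! i \<in> set (take n fs)"
  by (metis in_set_conv_nth length_take min.absorb2 nth_take order_less_le_trans)

lemma span_take_sum:
  assumes "x \<in> gen_ideal (set (take n fs))" "n \<le> length fs"
  shows "\<exists>d. x = (\<Sum>i<n. d i * fs ! (i::nat))"
proof -
  have "x \<in> rmod.span (set (take n fs))" using assms(1) by (simp add: gen_ideal_span)
  then show ?thesis
  proof (induction rule: rmod.span_induct_alt)
    case base
    then show ?case by (intro exI[of _ "\<lambda>_. 0"]) simp
  next
    case (step c x y)
    then obtain d where d: "y = (\<Sum>i<n. d i * fs ! i)" by blast
    from step(1) obtain k where k: "k < n" "x = fs ! k"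
      using assms(2) by (auto simp: in_set_conv_nth)
    define d' where "d' = (\<lambda>i. d i + (if i = k then c else 0))"
    have "(\<Sum>i<n. d' i * fs ! i) = (\<Sum>i<n. d i * fs ! i) + (\<Sum>i<n. (if i = k then c * fs ! i else 0))"
      unfolding d'_def by (simp add: distrib_right sum.distrib if_distrib[of "\<lambda>z. z * _"] cong: if_cong)
    also have "(\<Sum>i<n. (if i = k then c * fs ! i else 0)) = c * fs ! k"
      using k(1) by (simp add: sum.delta)
    finally have "c * x + y = (\<Sum>i<n. d' i * fs ! i)" using d k(2) by (simp add: add.commute)
    then show ?case by blast
  qed
qed

lemma sum_in_take_ideal:
  assumes "n \<le> length fs"
  shows "(\<Sum>i<n. c i * fs ! i) \<in> gen_ideal (set (take n fs))"
  unfolding gen_ideal_span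
  by (intro rmod.span_sum rmod.span_scale rmod.span_base) (use assms nth_in_take in auto)

lemma koszul:
  assumes reg: "regular_seq fs"
  shows "n \<le> length fs \<Longrightarrow> \<forall>c. (\<Sum>i<n. c i * fs ! i) = 0 \<longrightarrow> (\<forall>i<n. c i \<in> gen_ideal (set (take n fs)))"
proof (induction n)
  case 0
  then show ?case by simp
next
  case (Suc n)
  show ?case
  proof (intro allI impI)
    fix c i
    assume sum0: "(\<Sum>i<Suc n. c i * fs ! i) = 0" and i: "i < Suc n"
    have nl: "n < length fs" using Suc.prems by simp
    let ?I = "gen_ideal (set (take n fs))"
    let ?I' = "gen_ideal (set (take (Suc n) fs))"
    have sub: "?I \<subseteq> ?I'" unfolding gen_ideal_span
      by (intro rmod.span_mono set_take_subset_set_take) simp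
    have fsn: "fs ! n \<in> ?I'" unfolding gen_ideal_span
      by (intro rmod.span_base nth_in_take) (use nl in auto)
    have "(\<Sum>i<n. c i * fs ! i) + c n * fs ! n = 0" using sum0 by simp
    then have "c n * fs ! n = - (\<Sum>i<n. c i * fs ! i)" by (simp add: eq_neg_iff_add_eq_0 add.commute)
    then have "fs ! n * c n = - (\<Sum>i<n. c i * fs ! i)" by (simp only: mult.commute)
    also have "\<dots> \<in> ?I" unfolding gen_ideal_span
      using sum_in_take_ideal[of n fs c] nl by (simp add: gen_ideal_span rmod.span_neg)
    finally have "fs ! n * c n \<in> ?I" .
    moreover have "\<forall>i<length fs. \<forall>g. fs ! i * g \<in> gen_ideal (set (take i fs)) \<longrightarrow> g \<in> gen_ideal (set (take i fs))"
      using reg unfolding regular_seq_def by (rule conjunct1)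
    ultimately have cn: "c n \<in> ?I" using nl by blast
    then obtain d where d: "c n = (\<Sum>i<n. d i * fs ! i)" using span_take_sum[of "c n" n fs] nl by auto
    define c' where "c' = (\<lambda>i. c i + d i * fs ! n)"
    have e1: "(\<Sum>i<n. c' i * fs ! i) = (\<Sum>i<n. c i * fs ! i) + fs ! n * (\<Sum>i<n. d i * fs ! i)"
    proof -
      have "c' i * fs ! i = c i * fs ! i + fs ! n * (d i * fs ! i)" for i
        unfolding c'_def by (simp only: distrib_right mult.assoc mult.left_commute)
      then have "(\<Sum>i<n. c' i * fs ! i) = (\<Sum>i<n. c i * fs ! i + fs ! n * (d i * fs ! i))"
        by (intro sum.cong) auto
      then show ?thesis by (simp only: sum.distrib sum_distrib_left)
    qed
    have e2: "fs ! n * (\<Sum>i<n. d i * fs ! i) = c n * fs ! n"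
      unfolding d[symmetric] by (rule mult.commute)
    have "(\<Sum>i<n. c' i * fs ! i) = 0"
      using e1 e2 \<open>(\<Sum>i<n. c i * fs ! i) + c n * fs ! n = 0\<close> by simp
    then have IH: "\<forall>i<n. c' i \<in> ?I" using Suc.IH nl by simp
    show "c i \<in> ?I'"
    proof (cases "i = n")
      case True
      then show ?thesis using cn sub by blast
    next
      case False
      then have "i < n" using i by simp
      then have "c' i \<in> ?I'" using IH sub by blast
      moreover have "d i * fs ! n \<in> ?I'" using fsn unfolding gen_ideal_span by (rule rmod.span_scale)
      ultimately have "c' i - d i * fs ! n \<in> ?I'" unfolding gen_ideal_span by (rule rmod.span_diff)
      then show ?thesis unfolding c'_def by simp
    qed
  qed
qed


lemma ideal_sum_rep:
  assumes "x \<in> gen_ideal (set fs)"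
  shows "\<exists>d. x = (\<Sum>i<length fs. d i * fs ! i)"
  using span_take_sum[of x "length fs" fs] assms by simp

lemma ci_disjoint:
  fixes S :: "('v::finite \<Rightarrow>\<^sub>0 nat) set"
  assumes ci: "complete_intersection (gen_ideal (monom ` S) :: ('v,'k::field) mpoly set)"
    and u: "u \<in> mingens (gen_ideal (monom ` S) :: ('v,'k) mpoly set)"
    and v: "v \<in> mingens (gen_ideal (monom ` S) :: ('v,'k) mpoly set)"
    and uv: "u \<noteq> v"
  shows "Poly_Mapping.keys u \<inter> Poly_Mapping.keys v = {}"
proof (rule ccontr)
  assume "Poly_Mapping.keys u \<inter> Poly_Mapping.keys v \<noteq> {}"
  then obtain y where y: "y \<in> Poly_Mapping.keys u" "y \<in> Poly_Mapping.keys v" by blast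
  define J where "J = (gen_ideal (monom ` S) :: ('v,'k) mpoly set)"
  from ci obtain fs where reg: "regular_seq fs" and J: "J = gen_ideal (set fs)"
    unfolding complete_intersection_def J_def by blast
  define n where "n = length fs"
  have uS: "u \<in> S" and umin: "\<And>s. s \<in> S \<Longrightarrow> mdvd s u \<Longrightarrow> s = u"
    using u unfolding mingens_monideal by blast+
  have vS: "v \<in> S" and vmin: "\<And>s. s \<in> S \<Longrightarrow> mdvd s v \<Longrightarrow> s = v"
    using v unfolding mingens_monideal by blast+
  have memJ: "monom t \<in> J \<longleftrightarrow> (\<exists>s\<in>S. mdvd s t)" for t
    unfolding J_def by (rule monom_in_monideal)
  have "monom u \<in> gen_ideal (set fs)" using memJ uS mdvd_refl J by blast
  then obtain al where al: "monom u = (\<Sum>i<n. al i * fs ! i)"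
    using ideal_sum_rep n_def by blast
  have "monom v \<in> gen_ideal (set fs)" using memJ vS mdvd_refl J by blast
  then obtain be where be: "monom v = (\<Sum>i<n. be i * fs ! i)"
    using ideal_sum_rep n_def by blast
  define a where "a = Abs_poly_mapping (\<lambda>z. Poly_Mapping.lookup v z - Poly_Mapping.lookup u z)"
  define b where "b = Abs_poly_mapping (\<lambda>z. Poly_Mapping.lookup u z - Poly_Mapping.lookup v z)"
  have la: "Poly_Mapping.lookup a z = Poly_Mapping.lookup v z - Poly_Mapping.lookup u z" for z
    unfolding a_def by simp
  have lb: "Poly_Mapping.lookup b z = Poly_Mapping.lookup u z - Poly_Mapping.lookup v z" for z
    unfolding b_def by simp
  have ab: "a + u = b + v"
    by (rule poly_mapping_eqI) (simp add: lookup_add la lb)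
  define E where "E = (\<lambda>i. monom a * al i - monom b * be i)"
  have "(\<Sum>i<n. E i * fs ! i) = monom a * (\<Sum>i<n. al i * fs ! i) - monom b * (\<Sum>i<n. be i * fs ! i)"
    unfolding E_def by (simp only: left_diff_distrib sum_subtractf sum_distrib_left mult.assoc)
  also have "\<dots> = 0"
    unfolding al[symmetric] be[symmetric] monom_mult ab by simp
  finally have "(\<Sum>i<n. E i * fs ! i) = 0" .
  then have EJ: "\<forall>i<n. E i \<in> J"
    using koszul[OF reg, of n] n_def J by simp
  have a_not: "\<not> (\<exists>s\<in>S. mdvd s a)"
  proof
    assume "\<exists>s\<in>S. mdvd s a"
    then obtain s where s: "s \<in> S" "mdvd s a" by blast
    have "mdvd a v" unfolding mdvd_def la by simp
    then have "s = v" using vmin s mdvd_trans by blast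
    then have "Poly_Mapping.lookup v y \<le> Poly_Mapping.lookup v y - Poly_Mapping.lookup u y"
      using s(2) unfolding mdvd_def la by blast
    moreover have "Poly_Mapping.lookup u y > 0" "Poly_Mapping.lookup v y > 0"
      using y by (simp_all add: in_keys_iff)
    ultimately show False by simp
  qed
  have b_not: "\<not> mdvd b a"
  proof
    assume "mdvd b a"
    then have "mdvd u v" unfolding mdvd_def la lb
      by (metis diff_is_0_eq le_diff_conv nat_le_linear zero_less_diff not_less)
    then show False using vmin uS uv by blast
  qed
  have al0: "Poly_Mapping.lookup (al i) 0 = 0" if i: "i < n" for i
  proof -
    have l1: "Poly_Mapping.lookup (monom a * al i) a = Poly_Mapping.lookup (al i) 0"
      using lookup_monom_mult[of a "al i" 0] by simp
    have "a \<notin> Poly_Mapping.keys (monom b * be i)"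
    proof
      assume "a \<in> Poly_Mapping.keys (monom b * be i)"
      then obtain q where "a = b + q" using keys_mult[of "monom b" "be i"] by auto
      then show False using b_not mdvd_add by blast
    qed
    then have l2: "Poly_Mapping.lookup (monom b * be i) a = 0" by (simp add: in_keys_iff)
    have "Poly_Mapping.lookup (E i) a = Poly_Mapping.lookup (al i) 0"
      unfolding E_def lookup_minus l1 l2 by simp
    moreover have "a \<notin> Poly_Mapping.keys (E i)"
    proof
      assume "a \<in> Poly_Mapping.keys (E i)"
      then have "\<exists>s\<in>S. mdvd s a" using monideal_keys EJ i unfolding J_def by blast
      then show False using a_not by blast
    qed
    ultimately show ?thesis by (simp add: in_keys_iff)
  qed
  have "u \<in> Poly_Mapping.keys (monom u :: ('v,'k) mpoly)" by simp
  then have "u \<in> Poly_Mapping.keys (\<Sum>i<n. al i * fs ! i)" unfolding al .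
  then obtain i where i: "i < n" "u \<in> Poly_Mapping.keys (al i * fs ! i)"
    using keys_sum[of "\<lambda>i. al i * fs ! i" "{..<n}"] by auto
  then obtain p q where pq: "u = p + q" "p \<in> Poly_Mapping.keys (al i)" "q \<in> Poly_Mapping.keys (fs ! i)"
    using keys_mult[of "al i" "fs ! i"] by blast
  have p0: "p \<noteq> 0" using pq(2) al0[OF i(1)] by (auto simp: in_keys_iff)
  have "fs ! i \<in> J" unfolding J gen_ideal_span
    by (intro rmod.span_base nth_mem) (use i n_def in simp)
  then obtain s where s: "s \<in> S" "mdvd s q" using monideal_keys pq(3) unfolding J_def by blast
  have qu: "mdvd q u" using mdvd_add[of q p] pq(1) by (simp add: add.commute)
  then have "s = u" using umin s mdvd_trans by blast
  then have "q = u" using s(2) qu mdvd_antisym by blast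
  then have "p = 0" using pq(1) by (metis add_cancel_left_left)
  then show False using p0 by blast
qed


definition sqm :: "'v::finite set \<Rightarrow> ('v \<Rightarrow>\<^sub>0 nat)" where
  "sqm A = Abs_poly_mapping (\<lambda>v. if v \<in> A then 1 else 0)"

lemma lookup_sqm: "Poly_Mapping.lookup (sqm A) v = (if v \<in> A then 1 else 0)"
  unfolding sqm_def by simp

lemma keys_sqm [simp]: "Poly_Mapping.keys (sqm A) = A"
  by (auto simp: in_keys_iff lookup_sqm split: if_splits)

lemma sqm_keys: "(\<forall>v. Poly_Mapping.lookup m v \<le> 1) \<Longrightarrow> sqm (Poly_Mapping.keys m) = m"
proof (rule poly_mapping_eqI)
  fix v assume "\<forall>v. Poly_Mapping.lookup m v \<le> 1"
  then have "Poly_Mapping.lookup m v \<le> 1" by blast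
  then show "Poly_Mapping.lookup (sqm (Poly_Mapping.keys m)) v = Poly_Mapping.lookup m v"
    by (cases "Poly_Mapping.lookup m v") (auto simp: lookup_sqm in_keys_iff)
qed

lemma mdvd_sqm: "mdvd (sqm A) m \<longleftrightarrow> A \<subseteq> Poly_Mapping.keys m"
  unfolding mdvd_def lookup_sqm by (auto simp: in_keys_iff)

lemma mdvd_sqm_sqm: "mdvd (sqm A) (sqm B) \<longleftrightarrow> A \<subseteq> B"
  by (simp add: mdvd_sqm)

lemma sqm_inj: "sqm A = sqm B \<longleftrightarrow> A = B"
  by (metis keys_sqm)

lemma update_sqm: "Poly_Mapping.update x 0 (sqm A) = sqm (A - {x})"
  by (rule poly_mapping_eqI) (simp add: lookup_update lookup_sqm)

lemma mdeg_sqm: "mdeg (sqm A) = card A"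
  unfolding mdeg_def by (simp add: lookup_sqm)

lemma monom_zero_one: "(monom 0 :: ('v,'k::field) mpoly) = 1"
  unfolding monom_def by simp

lemma nth_notin_take: "distinct xs \<Longrightarrow> i < length xs \<Longrightarrow> xs ! i \<notin> set (take i xs)"
  by (auto simp: in_set_conv_nth distinct_conv_nth)

lemma regular_disjoint:
  fixes F :: "'v::finite set set"
  assumes ne: "\<forall>A\<in>F. A \<noteq> {}" and dj: "\<forall>A\<in>F. \<forall>B\<in>F. A \<noteq> B \<longrightarrow> A \<inter> B = {}"
  shows "complete_intersection (gen_ideal (monom ` sqm ` F) :: ('v,'k::field) mpoly set)"
proof -
  have "finite F" by simp
  then obtain xs where xs: "set xs = F" "distinct xs" using finite_distinct_list by blast
  define fs where "fs = map (\<lambda>A. monom (sqm A) :: ('v,'k) mpoly) xs"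
  have setfs: "set fs = monom ` sqm ` F" unfolding fs_def using xs(1) by auto
  have settake: "set (take i fs) = monom ` sqm ` set (take i xs)" for i
    unfolding fs_def take_map by auto
  have "regular_seq fs"
    unfolding regular_seq_def
  proof (intro conjI allI impI)
    fix i g
    assume i: "i < length fs" and hg: "fs ! i * g \<in> gen_ideal (set (take i fs))"
    have il: "i < length xs" using i unfolding fs_def by simp
    define A where "A = xs ! i"
    have fsi: "fs ! i = monom (sqm A)" unfolding fs_def A_def using il by simp
    have AF: "A \<in> F" unfolding A_def using il xs(1) by auto
    have Anot: "A \<notin> set (take i xs)" unfolding A_def using nth_notin_take xs(2) il by blast
    have "\<forall>t\<in>Poly_Mapping.keys g. \<exists>s\<in>sqm ` set (take i xs). mdvd s t"
    proof
      fix t assume t: "t \<in> Poly_Mapping.keys g"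
      have "Poly_Mapping.lookup (fs ! i * g) (sqm A + t) = Poly_Mapping.lookup g t"
        unfolding fsi by (rule lookup_monom_mult)
      then have k: "sqm A + t \<in> Poly_Mapping.keys (fs ! i * g)" using t by (simp add: in_keys_iff)
      have m: "fs ! i * g \<in> gen_ideal (monom ` (sqm ` set (take i xs)))" using hg settake by simp
      obtain s where s: "s \<in> sqm ` set (take i xs)" "mdvd s (sqm A + t)"
        using monideal_keys[OF m k] by blast
      then obtain B where B: "B \<in> set (take i xs)" "s = sqm B" by blast
      have BF: "B \<in> F" using set_take_subset[of i xs] B(1) xs(1) by auto
      have "B \<noteq> A" using B(1) Anot by auto
      then have BA: "B \<inter> A = {}" using dj BF AF by blast
      have "B \<subseteq> Poly_Mapping.keys (sqm A + t)" using s(2) B(2) mdvd_sqm by blast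
      also have "\<dots> \<subseteq> A \<union> Poly_Mapping.keys t" using keys_add[of "sqm A" t] by simp
      finally have "B \<subseteq> Poly_Mapping.keys t" using BA by blast
      then show "\<exists>s\<in>sqm ` set (take i xs). mdvd s t" using B(1) mdvd_sqm by blast
    qed
    then show "g \<in> gen_ideal (set (take i fs))" unfolding settake by (rule monideal_memI)
  next
    show "gen_ideal (set fs) \<noteq> UNIV"
    proof
      assume "gen_ideal (set fs) = UNIV"
      then have "monom 0 \<in> gen_ideal (monom ` sqm ` F :: ('v,'k) mpoly set)" using setfs by simp
      then obtain s where "s \<in> sqm ` F" "mdvd s 0" unfolding monom_in_monideal by blast
      then obtain B where "B \<in> F" "B \<subseteq> Poly_Mapping.keys (0 :: 'v \<Rightarrow>\<^sub>0 nat)" using mdvd_sqm by blast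
      then show False using ne by simp
    qed
  qed
  then show ?thesis unfolding complete_intersection_def using setfs by metis
qed


definition minset :: "'a set set \<Rightarrow> 'a set set" where
  "minset F = {A \<in> F. \<forall>B\<in>F. B \<subseteq> A \<longrightarrow> B = A}"

lemma minsetD: "A \<in> minset F \<Longrightarrow> A \<in> F" "A \<in> minset F \<Longrightarrow> B \<in> F \<Longrightarrow> B \<subseteq> A \<Longrightarrow> B = A"
  unfolding minset_def by blast+

lemma minsetI: "A \<in> F \<Longrightarrow> (\<And>B. B \<in> F \<Longrightarrow> B \<subseteq> A \<Longrightarrow> B = A) \<Longrightarrow> A \<in> minset F"
  unfolding minset_def by blast

lemma ex_min_below:
  fixes F :: "'v::finite set set"
  assumes "A \<in> F"
  shows "\<exists>M\<in>minset F. M \<subseteq> A"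
proof -
  have "finite F" by simp
  from finite_has_minimal2[OF this assms] obtain m where
    "m \<in> F" "m \<subseteq> A" "\<forall>b\<in>F. b \<subseteq> m \<longrightarrow> m = b" by blast
  then show ?thesis unfolding minset_def by blast
qed

lemma comb:
  fixes GG :: "'v::finite set set" and H :: "'v set"
  defines "Fx \<equiv> (\<lambda>x. (\<lambda>A. A - {x}) ` GG)"
  defines "Bfam \<equiv> (\<lambda>A. A - H) ` (GG - {H})"
  assumes anti: "\<And>A B. A \<in> GG \<Longrightarrow> B \<in> GG \<Longrightarrow> B \<subseteq> A \<Longrightarrow> B = A"
    and HG: "H \<in> GG" and cH: "card H \<ge> 2"
    and DM: "\<And>x A1 A2. x \<in> \<Union>GG \<Longrightarrow> A1 \<in> minset (Fx x) \<Longrightarrow> A2 \<in> minset (Fx x) \<Longrightarrow> A1 \<noteq> A2 \<Longrightarrow> A1 \<inter> A2 = {}"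
    and B1: "B1 \<in> minset Bfam" and B2: "B2 \<in> minset Bfam" and B12: "B1 \<noteq> B2"
  shows "B1 \<inter> B2 = {}"
proof (rule ccontr)
  assume "B1 \<inter> B2 \<noteq> {}"
  then obtain y where yB1: "y \<in> B1" and yB2: "y \<in> B2" by blast
  have finH: "finite H" by simp
  have Hne: "H \<noteq> {}" using cH by auto
  have Bfam_cases: "\<exists>A. A \<in> GG \<and> A \<noteq> H \<and> B = A - H" if "B \<in> Bfam" for B
    using that unfolding Bfam_def by blast
  have BfamI: "A - H \<in> Bfam" if "A \<in> GG" "A \<noteq> H" for A
    unfolding Bfam_def using that by blast
  have FxI: "A - {x} \<in> Fx x" if "A \<in> GG" for A x
    unfolding Fx_def using that by blast
  have Fx_cases: "\<exists>g. g \<in> GG \<and> C = g - {x}" if "C \<in> Fx x" for C x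
    using that unfolding Fx_def by blast
  have BH: "B \<inter> H = {}" if "B \<in> Bfam" for B
    using Bfam_cases[OF that] by blast
  have notsub: "\<not> H \<subseteq> B \<union> {x}" if "B \<inter> H = {}" for B x
  proof
    assume "H \<subseteq> B \<union> {x}"
    then have "H \<subseteq> {x}" using that by blast
    then have "card H \<le> card {x}" by (intro card_mono) auto
    then show False using cH by simp
  qed
  have stepA: "\<exists>x\<in>H. \<exists>g\<in>GG. g \<subseteq> B \<union> {x}" if B: "B \<in> minset Bfam" for B
  proof -
    obtain A where A: "A \<in> GG" "A \<noteq> H" "B = A - H" using Bfam_cases minsetD(1)[OF B] by blast
    have "\<not> H \<subseteq> A" using anti[OF A(1) HG] A(2) by blast
    then obtain z where z: "z \<in> H" "z \<notin> A" by blast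
    have "card (H - {z}) \<ge> 1" using cH z(1) finH by simp
    then have "H - {z} \<noteq> {}" by (metis card.empty not_one_le_zero)
    then obtain x where x: "x \<in> H" "x \<noteq> z" by blast
    obtain m where m: "m \<in> minset (Fx x)" "m \<subseteq> A - {x}"
      using ex_min_below[OF FxI[OF A(1), of x]] by blast
    have Hmin: "H - {x} \<in> minset (Fx x)"
    proof (rule minsetI)
      show "H - {x} \<in> Fx x" using FxI[OF HG] .
    next
      fix C assume C: "C \<in> Fx x" "C \<subseteq> H - {x}"
      then obtain g where g: "g \<in> GG" "C = g - {x}" using Fx_cases by blast
      then have "g \<subseteq> H" using C(2) x(1) by blast
      then have "g = H" using anti[OF HG g(1)] by blast
      then show "C = H - {x}" using g(2) by simp
    qed
    have "m \<noteq> H - {x}" using m(2) z x by blast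
    moreover have "x \<in> \<Union>GG" using x(1) HG by blast
    ultimately have mH: "m \<inter> (H - {x}) = {}" using DM m(1) Hmin by blast
    obtain g1 where g1: "g1 \<in> GG" "m = g1 - {x}" using Fx_cases minsetD(1)[OF m(1)] by blast
    have "m \<subseteq> B" using m(2) mH A(3) by blast
    then have "g1 \<subseteq> B \<union> {x}" using g1(2) by blast
    then show ?thesis using x(1) g1(1) by blast
  qed
  have yH: "y \<notin> H" using BH[OF minsetD(1)[OF B1]] yB1 by blast
  have yG: "y \<in> \<Union>GG" using Bfam_cases[OF minsetD(1)[OF B1]] yB1 by blast
  have Hmin_y: "H \<in> minset (Fx y)"
  proof (rule minsetI)
    show "H \<in> Fx y" using FxI[OF HG, of y] yH by simp
  next
    fix C assume C: "C \<in> Fx y" "C \<subseteq> H"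
    then obtain g where g: "g \<in> GG" "C = g - {y}" using Fx_cases by blast
    show "C = H"
    proof (cases "y \<in> g")
      case False
      then have "g \<subseteq> H" using C(2) g(2) by blast
      then have "g = H" using anti[OF HG g(1)] by blast
      then show ?thesis using g(2) False by simp
    next
      case True
      then have gH: "g \<noteq> H" using yH by blast
      have gsub: "g - H \<subseteq> {y}" using C(2) g(2) by blast
      have "g - H \<in> Bfam" using BfamI[OF g(1) gH] .
      moreover have "g - H \<subseteq> B1" "g - H \<subseteq> B2" using gsub yB1 yB2 by blast+
      ultimately have "g - H = B1" "g - H = B2" using minsetD(2)[OF B1] minsetD(2)[OF B2] by blast+
      then show ?thesis using B12 by simp
    qed
  qed
  have step2: "B \<in> GG" if B: "B \<in> minset Bfam" and yB: "y \<in> B" for B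
  proof -
    have BHd: "B \<inter> H = {}" using BH[OF minsetD(1)[OF B]] .
    obtain x g1 where x: "x \<in> H" and g1: "g1 \<in> GG" "g1 \<subseteq> B \<union> {x}" using stepA[OF B] by blast
    obtain m where m: "m \<in> minset (Fx y)" "m \<subseteq> g1 - {y}"
      using ex_min_below[OF FxI[OF g1(1), of y]] by blast
    have "m \<noteq> H"
    proof
      assume "m = H"
      then have "H \<subseteq> B \<union> {x}" using m(2) g1(2) by blast
      then show False using notsub[OF BHd] by blast
    qed
    then have mH: "m \<inter> H = {}" using DM[OF yG m(1) Hmin_y] by blast
    obtain g3 where g3: "g3 \<in> GG" "m = g3 - {y}" using Fx_cases minsetD(1)[OF m(1)] by blast
    have mB: "m \<subseteq> B" using m(2) g1(2) mH x by blast
    have g3B: "g3 \<subseteq> B" using mB g3(2) yB by blast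
    have g3H: "g3 \<inter> H = {}" using g3B BHd by blast
    have "g3 \<noteq> H" using g3H Hne by blast
    then have "g3 - H \<in> Bfam" using BfamI[OF g3(1)] by blast
    moreover have "g3 - H = g3" using g3H by blast
    ultimately have "g3 = B" using minsetD(2)[OF B] g3B by metis
    then show ?thesis using g3(1) by simp
  qed
  have B1G: "B1 \<in> GG" using step2[OF B1 yB1] .
  have B2G: "B2 \<in> GG" using step2[OF B2 yB2] .
  obtain x where x: "x \<in> H" using Hne by blast
  have xG: "x \<in> \<Union>GG" using x HG by blast
  have step3: "B \<in> minset (Fx x)" if B: "B \<in> minset Bfam" and BG: "B \<in> GG" for B
  proof (rule minsetI)
    have BHd: "B \<inter> H = {}" using BH[OF minsetD(1)[OF B]] .
    then have "B - {x} = B" using x by blast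
    then show "B \<in> Fx x" using FxI[OF BG, of x] by simp
    fix C assume C: "C \<in> Fx x" "C \<subseteq> B"
    then obtain g where g: "g \<in> GG" "C = g - {x}" using Fx_cases by blast
    show "C = B"
    proof (cases "x \<in> g")
      case False
      then have "g \<subseteq> B" using C(2) g(2) by blast
      then have "g = B" using anti[OF BG g(1)] by blast
      then show ?thesis using g(2) False by simp
    next
      case True
      have "g \<noteq> H"
      proof
        assume "g = H"
        then have "H \<subseteq> B \<union> {x}" using C(2) g(2) by blast
        then show False using notsub[OF BHd] by blast
      qed
      then have "g - H \<in> Bfam" using BfamI[OF g(1)] by blast
      moreover have "g - H \<subseteq> B" using C(2) g(2) x by blast
      ultimately have "g - H = B" using minsetD(2)[OF B] by blast
      then show ?thesis using C(2) g(2) x by blast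
    qed
  qed
  have "B1 \<inter> B2 = {}" using DM[OF xG step3[OF B1 B1G] step3[OF B2 B2G] B12] .
  then show False using yB1 yB2 by blast
qed


lemma keys_add_nat: "Poly_Mapping.keys (f + g :: 'a \<Rightarrow>\<^sub>0 nat) = Poly_Mapping.keys f \<union> Poly_Mapping.keys g"
  by (auto simp: in_keys_iff lookup_add)

lemma mingens_sqm:
  "mingens (gen_ideal (monom ` sqm ` F) :: ('v::finite,'k::field) mpoly set) = sqm ` minset F"
proof
  show "mingens (gen_ideal (monom ` sqm ` F) :: ('v,'k) mpoly set) \<subseteq> sqm ` minset F"
  proof
    fix m assume "m \<in> mingens (gen_ideal (monom ` sqm ` F) :: ('v,'k) mpoly set)"
    then have m: "m \<in> sqm ` F" "\<And>s. s \<in> sqm ` F \<Longrightarrow> mdvd s m \<Longrightarrow> s = m"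
      unfolding mingens_monideal by blast+
    then obtain A where A: "A \<in> F" "m = sqm A" by blast
    have "A \<in> minset F"
    proof (rule minsetI)
      show "A \<in> F" by fact
      fix B assume "B \<in> F" "B \<subseteq> A"
      then have "sqm B = sqm A" using m(2)[of "sqm B"] A(2) mdvd_sqm_sqm by blast
      then show "B = A" by (simp add: sqm_inj)
    qed
    then show "m \<in> sqm ` minset F" using A(2) by blast
  qed
next
  show "sqm ` minset F \<subseteq> mingens (gen_ideal (monom ` sqm ` F) :: ('v,'k) mpoly set)"
  proof
    fix m assume "m \<in> sqm ` minset F"
    then obtain A where A: "A \<in> minset F" "m = sqm A" by blast
    have "m \<in> sqm ` F" using A minsetD(1) by blast
    moreover have "s = m" if s1: "s \<in> sqm ` F" and s2: "mdvd s m" for s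
    proof -
      obtain B where "B \<in> F" "s = sqm B" using s1 by blast
      then have "B \<subseteq> A" using s2 A(2) mdvd_sqm_sqm by blast
      then have "B = A" using minsetD(2)[OF A(1) \<open>B \<in> F\<close>] by blast
      then show ?thesis using \<open>s = sqm B\<close> A(2) by simp
    qed
    ultimately show "m \<in> mingens (gen_ideal (monom ` sqm ` F) :: ('v,'k) mpoly set)"
      unfolding mingens_monideal by blast
  qed
qed

theorem theorem4p4:
  fixes I :: "('v::finite, 'k::field) mpoly set" and h :: "'v \<Rightarrow>\<^sub>0 nat"
  assumes "nearly_complete_intersection I"
    and "h \<in> mingens I"
    and "mdeg h \<ge> 3"
  shows "\<exists>J :: ('v, 'k) mpoly set. complete_intersection J \<and>
           gen_ideal {monom h} \<inter> gen_ideal (monom ` (mingens I - {h}))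
             = {monom h * j | j. j \<in> J}"
proof -
  have nci: "sqfree_monomial_ideal I"
    "\<And>x. (\<exists>m\<in>mingens I. x \<in> Poly_Mapping.keys m) \<Longrightarrow> complete_intersection (subst_one x I)"
    using assms(1) unfolding nearly_complete_intersection_def by blast+
  obtain G0 where G0: "\<forall>m\<in>G0. \<forall>v. Poly_Mapping.lookup m v \<le> 1" "I = gen_ideal (monom ` G0)"
    using nci(1) unfolding sqfree_monomial_ideal_def by blast
  define GG0 where "GG0 = Poly_Mapping.keys ` G0"
  have "G0 = sqm ` GG0"
  proof -
    have "sqm ` GG0 = (\<lambda>m. sqm (Poly_Mapping.keys m)) ` G0" unfolding GG0_def by (simp add: image_image)
    also have "\<dots> = (\<lambda>m. m) ` G0"
    proof (rule image_cong[OF refl])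
      fix m assume "m \<in> G0"
      then have "\<forall>v. Poly_Mapping.lookup m v \<le> 1" using G0(1) by blast
      then show "sqm (Poly_Mapping.keys m) = m" by (rule sqm_keys)
    qed
    finally show ?thesis by simp
  qed
  define GG where "GG = minset GG0"
  have mgI: "mingens I = sqm ` GG"
    unfolding G0(2) \<open>G0 = sqm ` GG0\<close> GG_def by (rule mingens_sqm)
  have anti: "\<And>A B. A \<in> GG \<Longrightarrow> B \<in> GG \<Longrightarrow> B \<subseteq> A \<Longrightarrow> B = A"
    unfolding GG_def using minsetD by metis
  obtain H where HG: "H \<in> GG" and hH: "h = sqm H" using assms(2) mgI by blast
  have cH: "card H \<ge> 2" using assms(3) unfolding hH mdeg_sqm by simp
  define Fx where "Fx = (\<lambda>x. (\<lambda>A. A - {x}) ` GG)"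
  define Bfam where "Bfam = (\<lambda>A. A - H) ` (GG - {H})"
  have subst: "subst_one x I = gen_ideal (monom ` sqm ` Fx x)" for x
  proof -
    have "(\<lambda>m. monom (Poly_Mapping.update x 0 m)) ` mingens I = (monom ` sqm ` Fx x :: ('v,'k) mpoly set)"
      unfolding mgI Fx_def by (simp add: image_image update_sqm)
    then show ?thesis unfolding subst_one_def by simp
  qed
  have DM: "A1 \<inter> A2 = {}"
    if x: "x \<in> \<Union>GG" and A1: "A1 \<in> minset (Fx x)" and A2: "A2 \<in> minset (Fx x)" and ne: "A1 \<noteq> A2"
    for x A1 A2
  proof -
    obtain A where "A \<in> GG" "x \<in> A" using x by blast
    then have "\<exists>m\<in>mingens I. x \<in> Poly_Mapping.keys m" unfolding mgI by auto
    then have ci: "complete_intersection (gen_ideal (monom ` sqm ` Fx x) :: ('v,'k) mpoly set)"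
      using nci(2) subst by metis
    have "sqm A1 \<in> mingens (gen_ideal (monom ` sqm ` Fx x) :: ('v,'k) mpoly set)"
      "sqm A2 \<in> mingens (gen_ideal (monom ` sqm ` Fx x) :: ('v,'k) mpoly set)"
      unfolding mingens_sqm using A1 A2 by blast+
    moreover have "sqm A1 \<noteq> sqm A2" using ne by (simp add: sqm_inj)
    ultimately have "Poly_Mapping.keys (sqm A1) \<inter> Poly_Mapping.keys (sqm A2) = {}"
      using ci_disjoint[OF ci] by blast
    then show ?thesis by simp
  qed
  have disj: "B1 \<inter> B2 = {}" if "B1 \<in> minset Bfam" "B2 \<in> minset Bfam" "B1 \<noteq> B2" for B1 B2
  proof -
    have D: "\<And>x A1 A2. x \<in> \<Union>GG \<Longrightarrow> A1 \<in> minset ((\<lambda>A. A - {x}) ` GG) \<Longrightarrow>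
        A2 \<in> minset ((\<lambda>A. A - {x}) ` GG) \<Longrightarrow> A1 \<noteq> A2 \<Longrightarrow> A1 \<inter> A2 = {}"
      using DM unfolding Fx_def by blast
    have b1: "B1 \<in> minset ((\<lambda>A. A - H) ` (GG - {H}))" using that(1) unfolding Bfam_def .
    have b2: "B2 \<in> minset ((\<lambda>A. A - H) ` (GG - {H}))" using that(2) unfolding Bfam_def .
    show ?thesis
      apply (rule comb[where GG=GG and H=H])
      using anti apply blast
      using HG apply blast
      using cH apply blast
      using D apply blast
      using b1 apply blast
      using b2 apply blast
      using that(3) apply blast
      done
  qed
  have nonempty: "B \<noteq> {}" if Bm: "B \<in> minset Bfam" for B
  proof
    assume B0: "B = {}"
    obtain A where A: "A \<in> GG" "A \<noteq> H" "B = A - H"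
      using minsetD(1)[OF Bm] unfolding Bfam_def by blast
    then have "A \<subseteq> H" using B0 by blast
    then show False using anti[OF HG A(1)] A(2) by blast
  qed
  define J where "J = (gen_ideal (monom ` sqm ` minset Bfam) :: ('v,'k) mpoly set)"
  have ciJ: "complete_intersection J"
    unfolding J_def by (rule regular_disjoint) (use nonempty disj in blast)+
  have mgh: "mingens I - {h} = sqm ` (GG - {H})"
    unfolding mgI hH by (auto simp: sqm_inj)
  have span1: "gen_ideal {monom h} = range (\<lambda>k. k * (monom h :: ('v,'k) mpoly))"
    unfolding gen_ideal_span by (rule rmod.span_singleton)
  have "gen_ideal {monom h} \<inter> gen_ideal (monom ` (mingens I - {h})) = {monom h * j | j. j \<in> J}"
  proof (intro equalityI subsetI)
    fix f :: "('v,'k) mpoly" assume f: "f \<in> gen_ideal {monom h} \<inter> gen_ideal (monom ` (mingens I - {h}))"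
    then have "f \<in> range (\<lambda>k. k * (monom h :: ('v,'k) mpoly))" using span1 by blast
    then obtain c where "f = c * monom h" by blast
    then have c: "f = monom h * c" by (simp add: mult.commute)
    have fK: "f \<in> gen_ideal (monom ` sqm ` (GG - {H}))" using f mgh by simp
    have "\<forall>t\<in>Poly_Mapping.keys c. \<exists>s\<in>sqm ` minset Bfam. mdvd s t"
    proof
      fix t assume t: "t \<in> Poly_Mapping.keys c"
      have "Poly_Mapping.lookup f (h + t) = Poly_Mapping.lookup c t" unfolding c by (rule lookup_monom_mult)
      then have "h + t \<in> Poly_Mapping.keys f" using t by (simp add: in_keys_iff)
      from monideal_keys[OF fK this] obtain s where s: "s \<in> sqm ` (GG - {H})" "mdvd s (h + t)" by blast
      then obtain A where A: "A \<in> GG" "A \<noteq> H" "s = sqm A" by blast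
      have "A \<subseteq> H \<union> Poly_Mapping.keys t" using s(2) A(3) hH by (simp add: mdvd_sqm keys_add_nat)
      then have At: "A - H \<subseteq> Poly_Mapping.keys t" by blast
      have "A - H \<in> Bfam" unfolding Bfam_def using A by blast
      then obtain M where M: "M \<in> minset Bfam" "M \<subseteq> A - H" using ex_min_below by blast
      then have "mdvd (sqm M) t" using At by (simp add: mdvd_sqm)
      then show "\<exists>s\<in>sqm ` minset Bfam. mdvd s t" using M(1) by blast
    qed
    then have "c \<in> J" unfolding J_def by (rule monideal_memI)
    then show "f \<in> {monom h * j | j. j \<in> J}" using c by blast
  next
    fix f :: "('v,'k) mpoly" assume "f \<in> {monom h * j | j. j \<in> J}"
    then obtain j where j: "j \<in> J" "f = monom h * j" by blast
    have "f \<in> gen_ideal {monom h}" using span1 j(2) by (auto simp: mult.commute)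
    moreover have "f \<in> gen_ideal (monom ` sqm ` (GG - {H}))"
    proof (rule monideal_memI, rule ballI)
      fix t assume "t \<in> Poly_Mapping.keys f"
      then obtain q where q: "t = h + q" "q \<in> Poly_Mapping.keys j"
        using keys_mult[of "monom h" j] j(2) by auto
      from monideal_keys[OF j(1)[unfolded J_def] q(2)] obtain s
        where s: "s \<in> sqm ` minset Bfam" "mdvd s q" by blast
      then obtain M where M: "M \<in> minset Bfam" "s = sqm M" by blast
      then have Mq: "M \<subseteq> Poly_Mapping.keys q" using s(2) by (simp add: mdvd_sqm)
      obtain A where A: "A \<in> GG" "A \<noteq> H" "M = A - H"
        using minsetD(1)[OF M(1)] unfolding Bfam_def by blast
      have "A \<subseteq> Poly_Mapping.keys t" using Mq A(3) q(1) hH by (auto simp: keys_add_nat)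
      then have "mdvd (sqm A) t" by (simp add: mdvd_sqm)
      then show "\<exists>s\<in>sqm ` (GG - {H}). mdvd s t" using A(1,2) by blast
    qed
    ultimately show "f \<in> gen_ideal {monom h} \<inter> gen_ideal (monom ` (mingens I - {h}))"
      using mgh by simp
  qed
  then show ?thesis using ciJ by blast
qed

end
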